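(* For any odd prime $p$ and any non-negative integer $k$, \[ C^{(-k-1)}_{p-2}\equiv\begin{cases}0\pmod p & \text{if } k\not\equiv 0\pmod{p-1},\\ 1\pmod p & \text{if } k\equiv 0\pmod{p-1}.\end{cases} \]
   Context: For any integer $k$, let $\mathrm{Li}_k(t)=\sum_{n=1}^{\infty} t^n/n^k$. The poly-Bernoulli numbers of type $C$, $C^{(k)}_n$ ($n\ge0$), are defined by $\frac{\mathrm{Li}_k(1-e^{-t})}{e^{t}-1}=\sum_{n=0}^{\infty}C^{(k)}_n\frac{t^n}{n!}$. For negative upper index these are integers. *)

theory Defs
  imports "HOL-Computational_Algebra.Computational_Algebra" "HOL-Number_Theory.Number_Theory"
begin

definition Li_fps :: "int \<Rightarrow> rat fps" where
  "Li_fps k = Abs_fps (\<lambda>n. if n = 0 then 0 else (of_nat n) powi (- k))"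

definition polyBernC_gf :: "int \<Rightarrow> rat fps" where
  "polyBernC_gf k = (Li_fps k oo (1 - fps_exp (-1))) / (fps_exp 1 - 1)"

definition polyBernC :: "int \<Rightarrow> nat \<Rightarrow> rat" where
  "polyBernC k n = fact n * fps_nth (polyBernC_gf k) n"

end

theory Submission
  imports Defs
begin

lemma exp_X_pow:
  "fps_exp (-1::rat) * (1 - fps_exp (-1))^i =
   (\<Sum>r\<le>i. fps_const (of_nat (i choose r) * (-1)^r) * fps_exp (- (of_nat r + 1)))"
proof -
  have "(1 - fps_exp (-1::rat))^i = (- fps_exp (-1) + 1)^i" by simp
  also have "\<dots> = (\<Sum>r\<le>i. of_nat (i choose r) * (- fps_exp (-1::rat))^r)"
    by (subst binomial_ring) (simp add: atLeast0AtMost)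
  finally have "fps_exp (-1::rat) * (1 - fps_exp (-1))^i =
     (\<Sum>r\<le>i. fps_exp (-1) * (of_nat (i choose r) * (- fps_exp (-1::rat))^r))"
    by (simp add: sum_distrib_left)
  also have "\<dots> = (\<Sum>r\<le>i. fps_const (of_nat (i choose r) * (-1)^r) * fps_exp (- (of_nat r + 1)))"
  proof (rule sum.cong[OF refl])
    fix r
    have "(- fps_exp (-1::rat))^r = fps_const ((-1)^r) * fps_exp (- of_nat r)"
      by (simp add: power_minus' fps_exp_power_mult fps_const_neg[symmetric] fps_const_power[symmetric])
    moreover have "fps_exp (-1::rat) * fps_exp (- of_nat r) = fps_exp (- (of_nat r + 1))"
      by (simp add: fps_exp_add_mult[symmetric] add.commute)
    moreover have "(of_nat (i choose r) :: rat fps) = fps_const (of_nat (i choose r))"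
      by (simp add: fps_of_nat)
    ultimately show "fps_exp (-1) * (of_nat (i choose r) * (- fps_exp (-1::rat))^r) =
       fps_const (of_nat (i choose r) * (-1)^r) * fps_exp (- (of_nat r + 1))"
      by (metis (no_types, lifting) fps_const_mult mult.assoc mult.left_commute)
  qed
  finally show ?thesis .
qed

definition Lsh :: "nat \<Rightarrow> rat fps" where
  "Lsh k = Abs_fps (\<lambda>n. of_nat (n+1) ^ (k+1))"

lemma gf_eq: "polyBernC_gf (- int k - 1) = fps_exp (-1) * (Lsh k oo (1 - fps_exp (-1)))"
proof -
  define X where "X = 1 - fps_exp (-1::rat)"
  define D where "D = fps_exp (1::rat) - 1"
  have X0: "X $ 0 = 0" by (simp add: X_def)
  have L: "Li_fps (- int k - 1) = fps_X * Lsh k"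
  proof (rule fps_ext)
    fix n
    have "- (- int k - 1) = int (k+1)" by simp
    have P: "(x::rat) powi (1 + int k) = x * x^k" for x
      using power_int_of_nat[of x "Suc k"] by simp
    then show "Li_fps (- int k - 1) $ n = (fps_X * Lsh k) $ n"
      by (cases n) (simp_all add: Li_fps_def Lsh_def P del: of_nat_Suc)
  qed
  have "Li_fps (- int k - 1) oo X = X * (Lsh k oo X)"
    unfolding L fps_compose_mult_distrib[OF X0] fps_X_fps_compose_startby0[OF X0] ..
  moreover have "X = D * fps_exp (-1)"
    by (simp add: X_def D_def algebra_simps fps_exp_add_mult[symmetric])
  moreover have "D \<noteq> 0"
  proof
    assume "D = 0"
    then have "D $ 1 = 0" by simp
    then show False by (simp add: D_def)
  qed
  ultimately show ?thesis
    unfolding polyBernC_gf_def X_def[symmetric] D_def[symmetric]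
    by (simp add: mult.assoc)
qed

lemma coeff_eq:
  "(fps_exp (-1) * (Lsh k oo (1 - fps_exp (-1)))) $ n =
   (\<Sum>i\<le>n. of_nat (i+1)^(k+1) * (\<Sum>r\<le>i. of_nat (i choose r) * (-1)^r * (- (of_nat r + 1))^n / fact n))"
proof -
  define X where "X = 1 - fps_exp (-1::rat)"
  have X0: "X $ 0 = 0" by (simp add: X_def)
  define T where "T = (\<Sum>i\<le>n. fps_const (of_nat (i+1)^(k+1)) * X^i)"
  have TC: "(Lsh k oo X) $ j = T $ j" if "j \<le> n" for j
  proof -
    have "(Lsh k oo X) $ j = (\<Sum>i=0..j. of_nat (i+1)^(k+1) * (X^i) $ j)"
      by (simp add: fps_compose_nth Lsh_def)
    also have "\<dots> = (\<Sum>i\<le>n. of_nat (i+1)^(k+1) * (X^i) $ j)"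
      using that startsby_zero_power_prefix[OF X0]
      by (intro sum.mono_neutral_left) auto
    also have "\<dots> = T $ j" by (simp add: T_def fps_sum_nth)
    finally show ?thesis .
  qed
  have "(fps_exp (-1) * (Lsh k oo X)) $ n = (fps_exp (-1) * T) $ n"
    unfolding fps_mult_nth using TC by (intro sum.cong) auto
  also have "fps_exp (-1) * T = (\<Sum>i\<le>n. fps_const (of_nat (i+1)^(k+1)) * (fps_exp (-1) * X^i))"
    by (simp add: T_def sum_distrib_left mult_ac)
  also have "\<dots> = (\<Sum>i\<le>n. fps_const (of_nat (i+1)^(k+1)) * 
      (\<Sum>r\<le>i. fps_const (of_nat (i choose r) * (-1)^r) * fps_exp (- (of_nat r + 1))))"
    unfolding X_def exp_X_pow ..
  finally show ?thesis
    by (simp add: X_def fps_sum_nth)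
qed

lemma polyBernC_eq:
  "polyBernC (- int k - 1) n = of_int (\<Sum>i\<le>n. (int i+1)^(k+1) * (\<Sum>r\<le>i. int (i choose r) * (-1)^r * (- (int r+1))^n))"
proof -
  have "polyBernC (- int k - 1) n = fact n * (\<Sum>i\<le>n. of_nat (i+1)^(k+1) * (\<Sum>r\<le>i. of_nat (i choose r) * (-1)^r * (- (of_nat r + 1))^n / fact n))"
    unfolding polyBernC_def gf_eq coeff_eq ..
  also have "\<dots> = (\<Sum>i\<le>n. of_nat (i+1)^(k+1) * (\<Sum>r\<le>i. of_nat (i choose r) * (-1)^r * (- (of_nat r + 1))^n))"
    unfolding sum_distrib_left by (intro sum.cong refl) simp
  also have "\<dots> = of_int (\<Sum>i\<le>n. (int i+1)^(k+1) * (\<Sum>r\<le>i. int (i choose r) * (-1)^r * (- (int r+1))^n))"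
    by (simp add: add.commute)
  finally show ?thesis .
qed

lemma powsum:
  fixes p k :: nat
  assumes p: "prime p"
  shows "[(\<Sum>l\<in>{0<..<p}. int l ^ k) = (if (p-1) dvd k then -1 else 0)] (mod int p)"
proof -
  obtain g where g: "g \<in> totatives p" "ord p g = p - 1"
    using residue_prime_has_primroot[OF p] by blast
  have p1: "p > 1" using p prime_gt_1_nat by blast
  have cop: "coprime p g" using g(1) by (simp add: totatives_def coprime_commute)
  have rp: "residue_primroot p g"
    using p1 cop g(2) by (simp add: residue_primroot_def totient_prime[OF p])
  have bij: "bij_betw (\<lambda>i. g ^ i mod p) {..<p-1} {0<..<p}"
    using residue_primroot_is_generator[OF p1 rp] by (simp add: totient_prime[OF p] totatives_prime[OF p])
  define x where "x = int g ^ k"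
  have "(\<Sum>l\<in>{0<..<p}. int l ^ k) = (\<Sum>i<p-1. int (g ^ i mod p) ^ k)"
    using sum.reindex_bij_betw[OF bij, of "\<lambda>l. int l ^ k"] by simp
  also have "[\<dots> = (\<Sum>i<p-1. x ^ i)] (mod int p)"
  proof (rule cong_sum)
    fix i
    have "[int (g ^ i mod p) = int g ^ i] (mod int p)"
      by (simp add: of_nat_mod cong_def)
    then have "[int (g ^ i mod p) ^ k = (int g ^ i) ^ k] (mod int p)"
      by (rule cong_pow)
    then show "[int (g ^ i mod p) ^ k = x ^ i] (mod int p)"
      by (simp add: x_def power_mult[symmetric] mult.commute)
  qed
  finally have S: "[(\<Sum>l\<in>{0<..<p}. int l ^ k) = (\<Sum>i<p-1. x ^ i)] (mod int p)" .
  have ferm: "[int g ^ (p-1) = 1] (mod int p)"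
    using ord_divides[of g "p-1" p] g(2) cong_int_iff[of "g^(p-1)" 1 p] by simp
  show ?thesis
  proof (cases "(p-1) dvd k")
    case True
    then obtain j where j: "k = (p-1) * j" by blast
    have x1: "[x = 1] (mod int p)"
      using cong_pow[OF ferm, of j] by (simp add: x_def j power_mult)
    have "[(\<Sum>i<p-1. x ^ i) = (\<Sum>i<p-1. 1)] (mod int p)"
      by (rule cong_sum) (metis x1 cong_pow power_one)
    moreover have "[(\<Sum>i<p-1. 1::int) = -1] (mod int p)"
      using p1 by (simp add: cong_iff_dvd_diff of_nat_diff)
    ultimately show ?thesis using True S by (auto intro: cong_trans)
  next
    case False
    have xn1: "\<not> [x = 1] (mod int p)"
    proof
      assume "[x = 1] (mod int p)"
      then have "[g ^ k = 1] (mod p)"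
        using cong_int_iff[of "g^k" 1 p] by (simp add: x_def)
      then have "ord p g dvd k" using ord_divides by blast
      then show False using False g(2) by simp
    qed
    have xm: "[x ^ (p-1) = 1] (mod int p)"
      using cong_pow[OF ferm, of k] by (simp add: x_def power_mult[symmetric] mult.commute)
    have "int p dvd (x - 1) * (\<Sum>i<p-1. x ^ i)"
      using xm power_diff_1_eq[of x "p-1"] by (simp add: cong_iff_dvd_diff)
    moreover have "prime (int p)" using p by simp
    moreover have "\<not> int p dvd (x - 1)" using xn1 by (simp add: cong_iff_dvd_diff)
    ultimately have "int p dvd (\<Sum>i<p-1. x ^ i)" using prime_dvd_mult_iff by blast
    then have "[(\<Sum>i<p-1. x ^ i) = 0] (mod int p)" by (simp add: cong_0_iff)
    from cong_trans[OF S this] show ?thesis using False by simp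
  qed
qed

lemma alt1: "(\<Sum>r\<le>i. int (Suc i choose Suc r) * (-1)^r) = 1"
proof -
  have "(\<Sum>s\<le>Suc i. (-1)^s * int (Suc i choose s)) = 0"
    by (rule choose_alternating_sum) simp
  then have "1 + (\<Sum>r\<le>i. (-1)^Suc r * int (Suc i choose Suc r)) = 0"
    by (simp only: sum.atMost_Suc_shift) simp
  then have "1 - (\<Sum>r\<le>i. (-1)^r * int (Suc i choose Suc r)) = 0"
    by (simp add: sum_negf)
  then show ?thesis by (simp add: mult.commute)
qed

lemma B1:
  fixes p i :: nat
  assumes p: "prime p" "odd p" and i: "i \<le> p - 2"
  shows "[(int i + 1) * (\<Sum>r\<le>i. int (i choose r) * (-1)^r * (- (int r + 1))^(p-2)) = -1] (mod int p)"
proof -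
  have p3: "p \<ge> 3" using p prime_ge_2_nat[OF p(1)] by (cases "p = 2") auto
  have od: "odd (p - 2)" using p(2) p3 by presburger
  have pm: "p - 1 = Suc (p - 2)" using p3 by arith
  have T: "(int i + 1) * (int (i choose r) * (-1)^r * (- (int r + 1))^(p-2)) =
     - (int (Suc i choose Suc r) * (-1)^r * (int r + 1)^(p-1))" for r
  proof -
    have a: "(- (int r + 1))^(p-2) = - ((int r+1)^(p-2))" by (rule power_minus_odd[OF od])
    have "int (Suc i * (i choose r)) = int ((Suc i choose Suc r) * Suc r)"
      using Suc_times_binomial_eq[of i r] by (simp only:)
    then have b: "(int i + 1) * int (i choose r) = int (Suc i choose Suc r) * (int r + 1)"
      by (simp only: of_nat_mult of_nat_Suc add.commute)
    have c: "(int r + 1)^(p-1) = (int r+1) * (int r+1)^(p-2)" unfolding pm by simp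
    show ?thesis unfolding a c
      by (simp add: mult.assoc[symmetric] b)
  qed
  have "(int i + 1) * (\<Sum>r\<le>i. int (i choose r) * (-1)^r * (- (int r + 1))^(p-2)) =
      (\<Sum>r\<le>i. - (int (Suc i choose Suc r) * (-1)^r * (int r + 1)^(p-1)))"
    unfolding sum_distrib_left T ..
  also have "[\<dots> = (\<Sum>r\<le>i. - (int (Suc i choose Suc r) * (-1)^r * 1))] (mod int p)"
  proof (rule cong_sum)
    fix r assume r: "r \<in> {..i}"
    have "\<not> p dvd Suc r" using r i p3 by (auto dest: dvd_imp_le)
    then have "[Suc r ^ (p-1) = 1] (mod p)" using fermat_theorem[OF p(1)] by blast
    then have "[(int r + 1) ^ (p-1) = 1] (mod int p)"
      using cong_int_iff[of "Suc r ^ (p-1)" 1 p] by (simp add: add.commute)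
    then show "[- (int (Suc i choose Suc r) * (-1)^r * (int r + 1)^(p-1)) =
       - (int (Suc i choose Suc r) * (-1)^r * 1)] (mod int p)"
      by (intro cong_minus_minus_iff[THEN iffD2] cong_mult cong_refl)
  qed
  also have "(\<Sum>r\<le>i. - (int (Suc i choose Suc r) * (-1)^r * 1)) = -1"
    using alt1[of i] by (simp add: sum_negf)
  finally show ?thesis .
qed

lemma main:
  fixes p k :: nat
  assumes p: "prime p" "odd p"
  shows "[(\<Sum>i\<le>p-2. (int i+1)^(k+1) * (\<Sum>r\<le>i. int (i choose r) * (-1)^r * (- (int r+1))^(p-2)))
          = (if [k = 0] (mod (p - 1)) then 1 else 0)] (mod int p)"
proof -
  have p3: "p \<ge> 3" using p prime_ge_2_nat[OF p(1)] by (cases "p = 2") auto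
  have "(\<Sum>i\<le>p-2. (int i+1)^(k+1) * (\<Sum>r\<le>i. int (i choose r) * (-1)^r * (- (int r+1))^(p-2)))
     = (\<Sum>i\<le>p-2. (int i+1)^k * ((int i+1) * (\<Sum>r\<le>i. int (i choose r) * (-1)^r * (- (int r+1))^(p-2))))"
    by (simp add: mult_ac)
  also have "[\<dots> = (\<Sum>i\<le>p-2. (int i+1)^k * (-1))] (mod int p)"
    using B1[OF p] by (intro cong_sum cong_mult cong_refl) auto
  also have "(\<Sum>i\<le>p-2. (int i+1)^k * (-1)) = - (\<Sum>l\<in>{0<..<p}. int l ^ k)"
  proof -
    have "Suc ` {..p-2} = {Suc 0..Suc (p-2)}"
      by (simp add: atLeast0AtMost[symmetric] image_Suc_atLeastAtMost del: atLeast0AtMost)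
    also have "\<dots> = {0<..<p}" using p3 by auto
    finally have e: "{0<..<p} = Suc ` {..p-2}" ..
    show ?thesis unfolding e
      by (subst sum.reindex) (auto simp: sum_negf add.commute)
  qed
  also have "[- (\<Sum>l\<in>{0<..<p}. int l ^ k) = - (if (p-1) dvd k then -1 else 0)] (mod int p)"
    using powsum[OF p(1), of k] by (simp add: cong_minus_minus_iff)
  also have "- (if (p-1) dvd k then -1 else 0) = (if [k = 0] (mod (p - 1)) then 1 else (0::int))"
    by (simp add: cong_0_iff)
  finally show ?thesis .
qed


theorem theorem3p2:
  fixes p k :: nat
  assumes "prime p" and "odd p"
  shows "\<exists>c::int. polyBernC (- int k - 1) (p - 2) = of_int c \<and>
           [c = (if [k = 0] (mod (p - 1)) then 1 else 0)] (mod int p)"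
  using polyBernC_eq[of k "p-2"] main[OF assms, of k] by blast

end
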